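(* Let $\mathbb{F}\in\{\mathbb{R},\mathbb{C}\}$, $A\in\mathbb{F}^{m\times n}$, $b\in\mathbb{F}^m$ and $f:\mathbb{F}^n\to[0,\infty]$. A point $x'$ is a stationary point of $\mathcal{K}_{reg}(x)=\mathcal{Q}_2(f)(x)+\|Ax-b\|_2^2$ if and only if $$x'\in\operatorname*{argmin}_x\ \mathcal{Q}_2(f)(x)+\|x-z'\|_2^2,\qquad\text{where } z'=(I-A^*A)x'+A^*b.$$
   Context: $\mathcal{Q}_2(f)$ is the quadratic envelope of $f$: $\mathcal{Q}_2(f)(x)=\breve h(x)-\|x\|^2$, where $\breve h$ is the lower semicontinuous convex envelope of $h(x)=f(x)+\|x\|^2$. $A^*$ is the conjugate transpose, $\langle x,y\rangle=\sum_i x_i\overline{y_i}$, norms Euclidean. A stationary point of a function $g$ is a point $x$ with $0$ in the Fréchet subdifferential $\hat\partial g(x)$, i.e. the set of $v$ with $\liminf_{y\to x,y\ne x}(g(y)-g(x)-\mathrm{Re}\langle v,y-x\rangle)/\|y-x\|\ge0$. *)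

theory Defs
  imports "HOL-Analysis.Analysis"
begin

(* Extended-real-valued functions on a real inner product space
   (R^n, or C^n viewed as R^{2n} with inner product Re<x,y>). *)

definition ereal_convex :: "('v::real_vector \<Rightarrow> ereal) \<Rightarrow> bool" where
  "ereal_convex g \<longleftrightarrow> convex {(x, r::real). g x \<le> ereal r}"

definition ereal_lsc :: "('v::topological_space \<Rightarrow> ereal) \<Rightarrow> bool" where
  "ereal_lsc g \<longleftrightarrow> (\<forall>x. g x \<le> Liminf (at x) g)"

definition lsc_convex_envelope :: "('v::real_normed_vector \<Rightarrow> ereal) \<Rightarrow> 'v \<Rightarrow> ereal" where
  "lsc_convex_envelope h x =
     (SUP g \<in> {g. ereal_convex g \<and> ereal_lsc g \<and> (\<forall>y. g y \<le> h y)}. g x)"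

definition Q2 :: "('v::real_normed_vector \<Rightarrow> ereal) \<Rightarrow> 'v \<Rightarrow> ereal" where
  "Q2 f x = lsc_convex_envelope (\<lambda>y. f y + ereal ((norm y)\<^sup>2)) x - ereal ((norm x)\<^sup>2)"

(* Frechet subdifferential; empty where g is not finite (standard convention).
   For C^n the real inner product v \<bullet> w equals Re<v,w>. *)
definition frechet_subdiff :: "('v::real_inner \<Rightarrow> ereal) \<Rightarrow> 'v \<Rightarrow> 'v set" where
  "frechet_subdiff g x = {v. \<bar>g x\<bar> \<noteq> \<infinity> \<and>
     Liminf (at x) (\<lambda>y. (g y - g x - ereal (v \<bullet> (y - x))) / ereal (norm (y - x))) \<ge> 0}"

definition stationary_point :: "('v::real_inner \<Rightarrow> ereal) \<Rightarrow> 'v \<Rightarrow> bool" where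
  "stationary_point g x \<longleftrightarrow> 0 \<in> frechet_subdiff g x"

(* argmin in the sense of Rockafellar-Wets: empty if inf g = +infinity *)
definition ereal_argmin :: "('v \<Rightarrow> ereal) \<Rightarrow> 'v set" where
  "ereal_argmin g = {x. g x = (INF y. g y) \<and> (INF y. g y) \<noteq> \<infinity>}"

definition conj_transpose :: "complex^'n^'m \<Rightarrow> complex^'m^'n" where
  "conj_transpose A = (\<chi> i j. cnj (A $ j $ i))"

end

theory Submission
  imports Defs
begin

lemma liminf_perturb:
  fixes Q1 Q2 :: "'a \<Rightarrow> ereal"
  assumes ev: "\<forall>\<^sub>F y in F. Q1 y = Q2 y + ereal (w y)" and w: "(w \<longlongrightarrow> 0) F"
    and L: "0 \<le> Liminf F Q2"
  shows "0 \<le> Liminf F Q1"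
proof (unfold le_Liminf_iff, intro allI impI)
  fix y0 :: ereal assume "y0 < 0"
  then obtain r where r: "y0 < ereal r" "ereal r < 0" using ereal_dense2 by blast
  hence rn: "r < 0" by simp
  have e1: "\<forall>\<^sub>F y in F. ereal (r/2) < Q2 y"
    using L rn unfolding le_Liminf_iff by auto
  have e2: "\<forall>\<^sub>F y in F. \<bar>w y\<bar> < - r/2"
    using w rn by (auto simp: tendsto_iff dist_real_def)
  show "\<forall>\<^sub>F y in F. y0 < Q1 y"
    using e1 e2 ev
  proof eventually_elim
    case (elim y)
    show ?case
    proof (cases "Q2 y")
      case (real q)
      with elim have "q > r/2" by simp
      have "Q1 y = ereal (q + w y)" using elim real by simp
      moreover have "q + w y > r" using \<open>q > r/2\<close> elim by (auto simp: abs_less_iff)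
      ultimately have "ereal r < Q1 y" by simp
      thus ?thesis using r(1) by (rule order.strict_trans[rotated])
    next
      case PInf with elim show ?thesis using r by auto
    next
      case MInf with elim show ?thesis by simp
    qed
  qed
qed

lemma ereal_convex_SUP:
  assumes "\<forall>g\<in>S. ereal_convex g"
  shows "ereal_convex (\<lambda>x. SUP g\<in>S. g x)"
proof -
  have "{(x, r::real). (SUP g\<in>S. g x) \<le> ereal r} = (\<Inter>g\<in>S. {(x, r::real). g x \<le> ereal r})"
    by (auto simp: SUP_le_iff)
  thus ?thesis using assms unfolding ereal_convex_def by (auto intro!: convex_INT)
qed

lemma env_props:
  fixes h :: "'v::real_normed_vector \<Rightarrow> ereal"
  assumes "\<And>y. h y \<ge> 0"
  shows "ereal_convex (lsc_convex_envelope h)" "\<And>x. lsc_convex_envelope h x \<ge> 0"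
proof -
  show "ereal_convex (lsc_convex_envelope h)"
    unfolding lsc_convex_envelope_def[abs_def]
    by (rule ereal_convex_SUP) auto
next
  fix x
  have c: "ereal_convex (\<lambda>_::'v. 0::ereal)"
  proof -
    have "{(x::'v, r::real). (0::ereal) \<le> ereal r} = UNIV \<times> {0..}" by auto
    thus ?thesis unfolding ereal_convex_def by (simp add: convex_Times)
  qed
  have l: "ereal_lsc (\<lambda>_::'v. 0::ereal)"
    unfolding ereal_lsc_def le_Liminf_iff by auto
  have "(\<lambda>_::'v. 0::ereal) \<in> {g. ereal_convex g \<and> ereal_lsc g \<and> (\<forall>y. g y \<le> h y)}"
    using c l assms by auto
  thus "lsc_convex_envelope h x \<ge> 0"
    unfolding lsc_convex_envelope_def by (metis (mono_tags, lifting) SUP_upper)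
qed

lemma quot_nonneg:
  fixes a :: ereal
  assumes "ereal g \<le> a" "n > 0"
  shows "0 \<le> (a - ereal g) / ereal n"
  using assms by (cases a) (auto simp: divide_nonneg_pos)

lemma core:
  fixes H :: "'v::real_inner \<Rightarrow> ereal" and L :: "'v \<Rightarrow> 'w::real_inner" and L' :: "'w \<Rightarrow> 'v"
  assumes conv: "ereal_convex H" and H0: "\<And>x. H x \<ge> 0"
    and bl: "bounded_linear L" and adj: "\<And>u w. L u \<bullet> w = u \<bullet> L' w"
  shows "stationary_point (\<lambda>x. (H x - ereal ((norm x)\<^sup>2)) + ereal ((norm (L x - b))\<^sup>2)) x' \<longleftrightarrow>
         x' \<in> ereal_argmin (\<lambda>x. (H x - ereal ((norm x)\<^sup>2)) + ereal ((norm (x - (x' - L' (L x' - b))))\<^sup>2))"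
proof -
  define z where "z = x' - L' (L x' - b)"
  define G where "G x = (H x - ereal ((norm x)\<^sup>2)) + ereal ((norm (x - z))\<^sup>2)" for x
  define K where "K x = (H x - ereal ((norm x)\<^sup>2)) + ereal ((norm (L x - b))\<^sup>2)" for x
  define s where "s x = (norm (L x - b))\<^sup>2 - (norm (x - z))\<^sup>2" for x
  have Kf: "(\<lambda>x. (H x - ereal ((norm x)\<^sup>2)) + ereal ((norm (L x - b))\<^sup>2)) = K"
    by (rule ext) (simp add: K_def)
  have Gf: "(\<lambda>x. (H x - ereal ((norm x)\<^sup>2)) + ereal ((norm (x - (x' - L' (L x' - b))))\<^sup>2)) = G"
    by (rule ext) (simp add: G_def z_def)
  have Gninf: "G x \<noteq> -\<infinity>" for x
    using H0[of x] by (cases "H x") (auto simp: G_def)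
  have KG: "K x = G x + ereal (s x)" for x
    by (cases "H x") (auto simp: G_def K_def s_def)
  have sdiff: "s y - s x' = (norm (L (y - x')))\<^sup>2 - (norm (y - x'))\<^sup>2" for y
  proof -
    define c where "c = L x' - b"
    have e1: "L y - b = L (y - x') + c" by (simp add: c_def linear_diff[OF bounded_linear.linear[OF bl]])
    have e2: "y - z = (y - x') + L' c" by (simp add: z_def c_def)
    have e3: "L x' - b = c" by (simp add: c_def)
    have e4: "x' - z = L' c" by (simp add: z_def c_def)
    have "s y - s x' = (norm (L (y - x') + c))\<^sup>2 - (norm ((y - x') + L' c))\<^sup>2 - ((norm c)\<^sup>2 - (norm (L' c))\<^sup>2)"
      unfolding s_def e1 e2 e3 e4 ..
    also have "\<dots> = (norm (L (y - x')))\<^sup>2 - (norm (y - x'))\<^sup>2 + 2 * (L (y - x') \<bullet> c - (y - x') \<bullet> L' c)"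
      by (simp add: power2_norm_eq_inner inner_add_left inner_add_right inner_commute algebra_simps)
    also have "\<dots> = (norm (L (y - x')))\<^sup>2 - (norm (y - x'))\<^sup>2" by (simp add: adj)
    finally show ?thesis .
  qed
  obtain C where C: "C > 0" "\<And>x. norm (L x) \<le> norm x * C"
    using bounded_linear.pos_bounded[OF bl] by blast
  define M where "M = C\<^sup>2 + 1"
  have sbound: "\<bar>s y - s x'\<bar> \<le> M * (norm (y - x'))\<^sup>2" for y
  proof -
    have a: "(norm (L (y - x')))\<^sup>2 \<le> (norm (y - x') * C)\<^sup>2"
      using C(2)[of "y - x'"] by (simp add: power_mono)
    have b: "0 \<le> (norm (y - x'))\<^sup>2" "0 \<le> (norm (L (y - x')))\<^sup>2" by simp_all
    show ?thesis unfolding sdiff M_def using a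
      apply (simp add: power_mult_distrib algebra_simps abs_le_iff)
      using b by linarith
  qed
  define \<alpha> where "\<alpha> x = (norm (x - z))\<^sup>2 - (norm x)\<^sup>2" for x
  have \<alpha>aff: "\<alpha> ((1 - t) *\<^sub>R u + t *\<^sub>R v) = (1 - t) * \<alpha> u + t * \<alpha> v" for u v t
  proof -
    have e: "\<alpha> x = (norm z)\<^sup>2 - 2 * (x \<bullet> z)" for x
      by (simp add: \<alpha>_def power2_norm_eq_inner inner_diff_left inner_diff_right inner_commute)
    show ?thesis unfolding e by (simp add: inner_add_left algebra_simps)
  qed
  have GH: "G x = H x + ereal (\<alpha> x)" for x
    by (cases "H x") (auto simp: G_def \<alpha>_def)
  have Gconv: "G ((1 - t) *\<^sub>R u + t *\<^sub>R v) \<le> ereal ((1 - t) * a + t * c)"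
    if "G u = ereal a" "G v = ereal c" "0 \<le> t" "t \<le> 1" for u v t a c
  proof -
    have hu: "H u = ereal (a - \<alpha> u)" using that(1) GH[of u] by (cases "H u") auto
    have hv: "H v = ereal (c - \<alpha> v)" using that(2) GH[of v] by (cases "H v") auto
    have "(u, a - \<alpha> u) \<in> {(x, r::real). H x \<le> ereal r}" "(v, c - \<alpha> v) \<in> {(x, r::real). H x \<le> ereal r}"
      using hu hv by auto
    from convexD[OF conv[unfolded ereal_convex_def] this, of "1 - t" t] that
    have "H ((1 - t) *\<^sub>R u + t *\<^sub>R v) \<le> ereal ((1 - t) * (a - \<alpha> u) + t * (c - \<alpha> v))"
      by simp
    thus ?thesis unfolding GH \<alpha>aff
      by (cases "H ((1 - t) *\<^sub>R u + t *\<^sub>R v)") (auto simp: algebra_simps)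
  qed
  define QG where "QG y = (G y - G x' - ereal (0 \<bullet> (y - x'))) / ereal (norm (y - x'))" for y
  define QK where "QK y = (K y - K x' - ereal (0 \<bullet> (y - x'))) / ereal (norm (y - x'))" for y
  have finKG: "\<bar>K x'\<bar> \<noteq> \<infinity> \<longleftrightarrow> \<bar>G x'\<bar> \<noteq> \<infinity>"
    using KG[of x'] Gninf[of x'] by (cases "G x'") auto
  define w where "w y = (s y - s x') / norm (y - x')" for y
  have wlim: "(w \<longlongrightarrow> 0) (at x')"
  proof (rule Lim_null_comparison)
    show "\<forall>\<^sub>F y in at x'. norm (w y) \<le> M * norm (y - x')"
    proof (rule always_eventually, intro allI)
      fix y show "norm (w y) \<le> M * norm (y - x')"
      proof (cases "y = x'")
        case True thus ?thesis by (simp add: w_def)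
      next
        case False
        hence n: "norm (y - x') > 0" by simp
        have "norm (w y) = \<bar>s y - s x'\<bar> / norm (y - x')" by (simp add: w_def)
        also have "\<dots> \<le> M * (norm (y - x'))\<^sup>2 / norm (y - x')"
          using sbound[of y] n by (simp add: divide_right_mono)
        also have "\<dots> = M * norm (y - x')" using n by (simp add: power2_eq_square)
        finally show ?thesis .
      qed
    qed
    have "((\<lambda>y. y - x') \<longlongrightarrow> 0) (at x')" by (rule LIM_zero) (rule tendsto_ident_at)
    hence "((\<lambda>y. norm (y - x')) \<longlongrightarrow> 0) (at x')" using tendsto_norm_zero by blast
    thus "((\<lambda>y. M * norm (y - x')) \<longlongrightarrow> 0) (at x')" using tendsto_mult_right_zero by blast
  qed
  have QKG: "\<forall>\<^sub>F y in at x'. QK y = QG y + ereal (w y)" if fin: "\<bar>G x'\<bar> \<noteq> \<infinity>"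
  proof -
    obtain gx where gx: "G x' = ereal gx" using fin Gninf[of x'] by (cases "G x'") auto
    have "QK y = QG y + ereal (w y)" if "y \<noteq> x'" for y
    proof -
      have n: "norm (y - x') > 0" using that by simp
      show ?thesis
      proof (cases "G y")
        case (real r)
        thus ?thesis using n unfolding QK_def QG_def w_def KG[of y] KG[of x'] gx
          by (simp add: diff_divide_distrib add_divide_distrib)
      next
        case PInf thus ?thesis using n unfolding QK_def QG_def w_def KG[of y] KG[of x'] gx
          by simp
      next
        case MInf thus ?thesis using Gninf by simp
      qed
    qed
    thus ?thesis unfolding eventually_at by (intro exI[of _ 1]) auto
  qed
  have statKG: "stationary_point K x' \<longleftrightarrow> (\<bar>G x'\<bar> \<noteq> \<infinity> \<and> 0 \<le> Liminf (at x') QG)"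
  proof
    assume st: "stationary_point K x'"
    hence fin: "\<bar>G x'\<bar> \<noteq> \<infinity>" and L: "0 \<le> Liminf (at x') QK"
      using finKG unfolding stationary_point_def frechet_subdiff_def QK_def[abs_def] by auto
    have "\<forall>\<^sub>F y in at x'. QG y = QK y + ereal (- w y)"
      using QKG[OF fin] by eventually_elim (case_tac "QG y"; simp)
    moreover have "((\<lambda>y. - w y) \<longlongrightarrow> 0) (at x')" using tendsto_minus[OF wlim] by simp
    ultimately have "0 \<le> Liminf (at x') QG" using L by (rule liminf_perturb)
    thus "\<bar>G x'\<bar> \<noteq> \<infinity> \<and> 0 \<le> Liminf (at x') QG" using fin by simp
  next
    assume a: "\<bar>G x'\<bar> \<noteq> \<infinity> \<and> 0 \<le> Liminf (at x') QG"
    have "0 \<le> Liminf (at x') QK" by (rule liminf_perturb[OF QKG[OF conjunct1[OF a]] wlim conjunct2[OF a]])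
    thus "stationary_point K x'" using a finKG
      unfolding stationary_point_def frechet_subdiff_def QK_def[abs_def] by auto
  qed
  have argmin: "x' \<in> ereal_argmin G \<longleftrightarrow> (\<bar>G x'\<bar> \<noteq> \<infinity> \<and> (\<forall>y. G x' \<le> G y))"
  proof
    assume "x' \<in> ereal_argmin G"
    hence e: "G x' = (INF y. G y)" "(INF y. G y) \<noteq> \<infinity>" unfolding ereal_argmin_def by auto
    thus "\<bar>G x'\<bar> \<noteq> \<infinity> \<and> (\<forall>y. G x' \<le> G y)" using Gninf[of x']
      by (auto intro: INF_lower)
  next
    assume a: "\<bar>G x'\<bar> \<noteq> \<infinity> \<and> (\<forall>y. G x' \<le> G y)"
    hence "G x' = (INF y. G y)"
      by (intro antisym INF_greatest) (auto intro: INF_lower)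
    thus "x' \<in> ereal_argmin G" using a unfolding ereal_argmin_def by auto
  qed
  have main: "(\<bar>G x'\<bar> \<noteq> \<infinity> \<and> 0 \<le> Liminf (at x') QG) \<longleftrightarrow> (\<bar>G x'\<bar> \<noteq> \<infinity> \<and> (\<forall>y. G x' \<le> G y))"
  proof (cases "\<bar>G x'\<bar> \<noteq> \<infinity>")
    case False thus ?thesis by simp
  next
    case fin: True
    obtain gx where gx: "G x' = ereal gx" using fin Gninf[of x'] by (cases "G x'") auto
    show ?thesis
    proof
      assume "\<bar>G x'\<bar> \<noteq> \<infinity> \<and> 0 \<le> Liminf (at x') QG"
      hence L: "0 \<le> Liminf (at x') QG" by simp
      show "\<bar>G x'\<bar> \<noteq> \<infinity> \<and> (\<forall>y. G x' \<le> G y)"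
      proof (rule ccontr)
        assume "\<not> ?thesis"
        then obtain y where y: "G y < G x'" using fin by (auto simp: not_le)
        then obtain gy where gy: "G y = ereal gy" using Gninf[of y] gx by (cases "G y") auto
        have lt: "gy < gx" using y gx gy by simp
        hence yx: "y \<noteq> x'" using gx gy by auto
        define d where "d = y - x'"
        have dn: "norm d > 0" using yx by (simp add: d_def)
        define c where "c = (gx - gy) / norm d"
        have c0: "c > 0" using lt dn by (simp add: c_def)
        have "\<forall>\<^sub>F p in at x'. ereal (- c / 2) < QG p"
          using L c0 unfolding le_Liminf_iff by auto
        then obtain \<delta> where \<delta>: "\<delta> > 0" "\<And>p. p \<noteq> x' \<Longrightarrow> dist p x' < \<delta> \<Longrightarrow> ereal (- c / 2) < QG p"
          unfolding eventually_at by auto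
        define t where "t = min 1 (\<delta> / (2 * norm d))"
        have t0: "t > 0" "t \<le> 1" using \<delta> dn by (auto simp: t_def)
        define p where "p = (1 - t) *\<^sub>R x' + t *\<^sub>R y"
        have pd: "p - x' = t *\<^sub>R d" by (simp add: p_def d_def algebra_simps)
        have np: "norm (p - x') = t * norm d" using pd t0 by simp
        have "t * norm d \<le> \<delta> / 2"
        proof -
          have "t * norm d \<le> (\<delta> / (2 * norm d)) * norm d"
            using dn by (intro mult_right_mono) (auto simp: t_def)
          thus ?thesis using dn by simp
        qed
        hence pdist: "dist p x' < \<delta>" using np \<delta> by (simp add: dist_norm)
        have pne: "p \<noteq> x'" using np t0 dn by auto
        have Gp: "G p \<le> ereal ((1 - t) * gx + t * gy)"
          unfolding p_def by (rule Gconv[OF gx gy]) (use t0 in auto)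
        then obtain gp where gp: "G p = ereal gp" using Gninf[of p] by (cases "G p") auto
        have tn: "t \<noteq> 0" "d \<noteq> 0" using t0 dn by auto
        have q: "QG p = ereal ((gp - gx) / (t * norm d))"
          unfolding QG_def gp gx np using tn by simp
        have r: "(gp - gx) / (t * norm d) \<le> - c"
        proof -
          have "gp - gx \<le> t * (gy - gx)" using Gp gp by (simp add: algebra_simps)
          hence "(gp - gx) / (t * norm d) \<le> t * (gy - gx) / (t * norm d)"
            using t0 dn by (intro divide_right_mono) auto
          also have "\<dots> = - c" using tn by (simp add: c_def) (simp add: divide_simps)
          finally show ?thesis .
        qed
        have "QG p \<le> ereal (- c / 2)" unfolding q using r c0 by simp
        with \<delta>(2)[OF pne pdist] show False by simp
      qed
    next
      assume a: "\<bar>G x'\<bar> \<noteq> \<infinity> \<and> (\<forall>y. G x' \<le> G y)"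
      have qg0: "QG y \<ge> 0" if "y \<noteq> x'" for y
        unfolding QG_def gx using a that gx by (auto intro!: quot_nonneg)
      have "0 \<le> Liminf (at x') QG"
        unfolding le_Liminf_iff
      proof (intro allI impI)
        fix y0 :: ereal assume y0: "y0 < 0"
        have "\<forall>y. y \<noteq> x' \<and> dist y x' < 1 \<longrightarrow> y0 < QG y"
        proof (intro allI impI)
          fix y assume "y \<noteq> x' \<and> dist y x' < 1"
          hence "0 \<le> QG y" using qg0 by blast
          thus "y0 < QG y" using y0 by (rule order.strict_trans2[rotated])
        qed
        thus "\<forall>\<^sub>F y in at x'. y0 < QG y" unfolding eventually_at by (intro exI[of _ 1]) auto
      qed
      thus "\<bar>G x'\<bar> \<noteq> \<infinity> \<and> 0 \<le> Liminf (at x') QG" using a by simp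
    qed
  qed
  show ?thesis unfolding Kf Gf statKG argmin main ..
qed

lemma cadj:
  fixes A :: "complex^'n^'m"
  shows "(A *v u) \<bullet> w = u \<bullet> (conj_transpose A *v w)"
proof -
  have t: "(a * p) \<bullet> q = p \<bullet> (cnj a * q)" for a p q :: complex
    by (simp add: inner_complex_def algebra_simps)
  have "(A *v u) \<bullet> w = (\<Sum>i\<in>UNIV. \<Sum>j\<in>UNIV. (A $ i $ j * u $ j) \<bullet> w $ i)"
    by (simp add: inner_vec_def matrix_vector_mult_def inner_sum_left)
  also have "\<dots> = (\<Sum>j\<in>UNIV. \<Sum>i\<in>UNIV. u $ j \<bullet> (cnj (A $ i $ j) * w $ i))"
    by (subst sum.swap) (simp add: t)
  also have "\<dots> = u \<bullet> (conj_transpose A *v w)"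
    by (simp add: inner_vec_def matrix_vector_mult_def inner_sum_right conj_transpose_def)
  finally show ?thesis .
qed

lemma Q2_eq: "Q2 f = (\<lambda>x. lsc_convex_envelope (\<lambda>y. f y + ereal ((norm y)\<^sup>2)) x - ereal ((norm x)\<^sup>2))"
  by (rule ext) (simp add: Q2_def)

lemma H_props:
  fixes f :: "'v::real_normed_vector \<Rightarrow> ereal"
  assumes "\<forall>x. f x \<ge> 0"
  shows "ereal_convex (lsc_convex_envelope (\<lambda>y. f y + ereal ((norm y)\<^sup>2)))"
    "\<And>x. lsc_convex_envelope (\<lambda>y. f y + ereal ((norm y)\<^sup>2)) x \<ge> 0"
  using env_props[of "\<lambda>y. f y + ereal ((norm y)\<^sup>2)"] assms by auto

theorem proposition3p2:
  shows
   "(\<forall>(A :: real^'n^'m) (b :: real^'m) (f :: real^'n \<Rightarrow> ereal) (x' :: real^'n).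
       (\<forall>x. f x \<ge> 0) \<longrightarrow>
       (stationary_point (\<lambda>x. Q2 f x + ereal ((norm (A *v x - b))\<^sup>2)) x' \<longleftrightarrow>
        x' \<in> ereal_argmin (\<lambda>x. Q2 f x +
              ereal ((norm (x - ((mat 1 - transpose A ** A) *v x' + transpose A *v b)))\<^sup>2))))
    \<and>
    (\<forall>(A :: complex^'n^'m) (b :: complex^'m) (f :: complex^'n \<Rightarrow> ereal) (x' :: complex^'n).
       (\<forall>x. f x \<ge> 0) \<longrightarrow>
       (stationary_point (\<lambda>x. Q2 f x + ereal ((norm (A *v x - b))\<^sup>2)) x' \<longleftrightarrow>
        x' \<in> ereal_argmin (\<lambda>x. Q2 f x +
              ereal ((norm (x - ((mat 1 - conj_transpose A ** A) *v x' + conj_transpose A *v b)))\<^sup>2))))"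
proof (intro conjI allI impI)
  fix A :: "real^'n^'m" and b :: "real^'m" and f :: "real^'n \<Rightarrow> ereal" and x' :: "real^'n"
  assume f0: "\<forall>x. f x \<ge> 0"
  have z: "(mat 1 - transpose A ** A) *v x' + transpose A *v b = x' - transpose A *v (A *v x' - b)"
    by (simp add: matrix_vector_mult_diff_rdistrib matrix_vector_mult_diff_distrib
        matrix_vector_mul_assoc[symmetric])
  have adj: "(A *v u) \<bullet> w = u \<bullet> (transpose A *v w)" for u w
    by (metis dot_lmul_matrix inner_commute transpose_matrix_vector)
  show "stationary_point (\<lambda>x. Q2 f x + ereal ((norm (A *v x - b))\<^sup>2)) x' \<longleftrightarrow>
        x' \<in> ereal_argmin (\<lambda>x. Q2 f x +
              ereal ((norm (x - ((mat 1 - transpose A ** A) *v x' + transpose A *v b)))\<^sup>2))"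
    unfolding z Q2_eq
    by (rule core[OF H_props[OF f0] linear_conv_bounded_linear[THEN iffD1, OF matrix_vector_mul_linear] adj])
next
  fix A :: "complex^'n^'m" and b :: "complex^'m" and f :: "complex^'n \<Rightarrow> ereal" and x' :: "complex^'n"
  assume f0: "\<forall>x. f x \<ge> 0"
  have z: "(mat 1 - conj_transpose A ** A) *v x' + conj_transpose A *v b = x' - conj_transpose A *v (A *v x' - b)"
    by (simp add: matrix_vector_mult_diff_rdistrib matrix_vector_mult_diff_distrib
        matrix_vector_mul_assoc[symmetric])
  show "stationary_point (\<lambda>x. Q2 f x + ereal ((norm (A *v x - b))\<^sup>2)) x' \<longleftrightarrow>
        x' \<in> ereal_argmin (\<lambda>x. Q2 f x +
              ereal ((norm (x - ((mat 1 - conj_transpose A ** A) *v x' + conj_transpose A *v b)))\<^sup>2))"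
    unfolding z Q2_eq
    by (rule core[OF H_props[OF f0] linear_conv_bounded_linear[THEN iffD1, OF matrix_vector_mul_linear] cadj])
qed

end
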